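(* Every finite solvable group has the eigenvalue one property.
   Context: A finite group $K$ has the eigenvalue one property if for every irreducible non-trivial $\mathbb{R}K$-module $W$ of odd dimension, affording $\sigma\colon K\to\mathrm{GL}(W)$, and every $m\in N_{\mathrm{GL}(W)}(\sigma(K))$ of finite order, there is $k\in K$ such that $\sigma(k)m$ has eigenvalue $1$. *)

theory Defs
  imports "HOL-Analysis.Analysis" "HOL-Algebra.Solvable_Groups"
begin

primrec matpow :: "real^'n^'n \<Rightarrow> nat \<Rightarrow> real^'n^'n" where
  "matpow m 0 = mat 1"
| "matpow m (Suc j) = m ** matpow m j"

definition real_rep :: "('a, 'b) monoid_scheme \<Rightarrow> ('a \<Rightarrow> real^'n^'n) \<Rightarrow> bool" where
  "real_rep G \<sigma> \<longleftrightarrow>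
     (\<forall>x\<in>carrier G. invertible (\<sigma> x)) \<and>
     (\<forall>x\<in>carrier G. \<forall>y\<in>carrier G. \<sigma> (x \<otimes>\<^bsub>G\<^esub> y) = \<sigma> x ** \<sigma> y)"

definition irreducible_rep :: "('a, 'b) monoid_scheme \<Rightarrow> ('a \<Rightarrow> real^'n^'n) \<Rightarrow> bool" where
  "irreducible_rep G \<sigma> \<longleftrightarrow>
     (\<forall>U :: (real^'n) set. subspace U \<and> (\<forall>k\<in>carrier G. \<forall>u\<in>U. \<sigma> k *v u \<in> U)
        \<longrightarrow> U = {0} \<or> U = UNIV)"

definition nontrivial_rep :: "('a, 'b) monoid_scheme \<Rightarrow> ('a \<Rightarrow> real^'n^'n) \<Rightarrow> bool" where
  "nontrivial_rep G \<sigma> \<longleftrightarrow> (\<exists>k\<in>carrier G. \<sigma> k \<noteq> mat 1)"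

definition in_normalizer_GL :: "('a, 'b) monoid_scheme \<Rightarrow> ('a \<Rightarrow> real^'n^'n) \<Rightarrow> real^'n^'n \<Rightarrow> bool" where
  "in_normalizer_GL G \<sigma> m \<longleftrightarrow>
     invertible m \<and> (\<lambda>k. m ** \<sigma> k ** matrix_inv m) ` carrier G = \<sigma> ` carrier G"

definition has_finite_order :: "real^'n^'n \<Rightarrow> bool" where
  "has_finite_order m \<longleftrightarrow> (\<exists>j>0. matpow m j = mat 1)"

definition has_eigenvalue_one :: "real^'n^'n \<Rightarrow> bool" where
  "has_eigenvalue_one A \<longleftrightarrow> (\<exists>v. v \<noteq> 0 \<and> A *v v = v)"

text \<open>Eigenvalue one property, restricted to modules W of dimension CARD('n)
  (every n-dimensional real vector space is isomorphic to real^'n). The full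
  property is the conjunction over all finite index types 'n.\<close>
definition eigenvalue_one_property_dim :: "('a, 'b) monoid_scheme \<Rightarrow> ('n::finite) itself \<Rightarrow> bool" where
  "eigenvalue_one_property_dim G (TYPE('n::finite)) \<longleftrightarrow>
     (odd CARD('n) \<longrightarrow>
       (\<forall>(\<sigma> :: 'a \<Rightarrow> real^'n^'n) m.
          real_rep G \<sigma> \<and> irreducible_rep G \<sigma> \<and> nontrivial_rep G \<sigma> \<and>
          in_normalizer_GL G \<sigma> m \<and> has_finite_order m
          \<longrightarrow> (\<exists>k\<in>carrier G. has_eigenvalue_one (\<sigma> k ** m))))"

end

theory Submission
  imports Defs "HOL-Algebra.Multiplicative_Group" "Jordan_Normal_Form.Char_Poly"
begin

lemma odd_degree_real_root:
  fixes p :: "real poly"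
  assumes "odd (degree p)"
  shows "\<exists>x. poly p x = 0"
proof -
  have main: "\<exists>x. poly p x = 0" if lc: "lead_coeff p > 0" and od: "odd (degree p)" for p :: "real poly"
  proof -
    define q where "q = - pcompose p [:0, -1:]"
    have dq: "degree [:0, -1::real:] = 1" by simp
    have "lead_coeff (pcompose p [:0, -1:]) = lead_coeff p * (-1) ^ degree p"
      using lead_coeff_comp[of "[:0, -1::real:]" p] dq by simp
    then have lq: "lead_coeff q = lead_coeff p"
      using od by (simp add: q_def lead_coeff_minus)
    obtain n1 where n1: "\<forall>x\<ge>n1. poly p x \<ge> lead_coeff p" using poly_pinfty_gt_lc[OF lc] by blast
    obtain n2 where n2: "\<forall>x\<ge>n2. poly q x \<ge> lead_coeff q" using poly_pinfty_gt_lc[of q] lq lc by auto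
    define a where "a = - max n2 (- n1) - 1"
    define b where "b = max n1 (- n2) + 1"
    have "a < b" unfolding a_def b_def by auto
    have "poly p b > 0" using n1 lc unfolding b_def by (smt (verit))
    moreover have "poly q (-a) > 0" using n2 lc lq unfolding a_def by (smt (verit))
    then have "poly p a < 0" by (simp add: q_def poly_pcompose)
    ultimately show ?thesis using poly_IVT_pos[OF \<open>a < b\<close>] by blast
  qed
  show ?thesis
  proof (cases "lead_coeff p > 0")
    case True then show ?thesis using main assms by blast
  next
    case False
    have "p \<noteq> 0" using assms by auto
    then have "lead_coeff p \<noteq> 0" by simp
    with False have "lead_coeff p < 0" by linarith
    then have "lead_coeff (-p) > 0" by (simp add: lead_coeff_minus)
    then obtain x where "poly (-p) x = 0" using main[of "-p"] assms by auto
    then show ?thesis by auto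
  qed
qed

lemma mv_scale: "(M::real^'n^'m) *v (c *\<^sub>R x) = c *\<^sub>R (M *v x)"
  using linear_scale[OF bounded_linear.linear[OF matrix_vector_mul_bounded_linear]] by blast
lemma mv_sum: "(M::real^'n^'m) *v sum g S = (\<Sum>x\<in>S. M *v g x)"
  using linear_sum[OF bounded_linear.linear[OF matrix_vector_mul_bounded_linear]] by blast

lemma odd_dim_eigenvector:
  fixes M :: "real^'n^'n" and R :: "(real^'n) set"
  assumes R: "subspace R" and inv: "\<And>r. r \<in> R \<Longrightarrow> M *v r \<in> R" and od: "odd (dim R)"
  shows "\<exists>r c. r \<in> R \<and> r \<noteq> 0 \<and> M *v r = c *\<^sub>R r"
proof -
  obtain B where BR: "B \<subseteq> R" and indB: "independent B" and RB: "R \<subseteq> span B" and cB: "card B = dim R"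
    using basis_exists by blast
  have finB: "finite B" using indB finiteI_independent by blast
  define d where "d = card B"
  obtain f where f: "bij_betw f {0..<d} B" using ex_bij_betw_nat_finite[OF finB] d_def by blast
  have fB: "f i \<in> B" if "i < d" for i using f that by (auto simp: bij_betw_def)
  define A :: "real mat" where "A = Matrix.mat d d (\<lambda>(i,j). representation B (M *v f j) (f i))"
  have Ac: "A \<in> carrier_mat d d" by (simp add: A_def)
  have "degree (char_poly A) = d" using degree_monic_char_poly[OF Ac] by simp
  then obtain t where "poly (char_poly A) t = 0" using odd_degree_real_root od cB d_def by metis
  then have "eigenvalue A t" using eigenvalue_root_char_poly[OF Ac] by simp
  then obtain v where v: "v \<in> carrier_vec d" "v \<noteq> 0\<^sub>v d" "A *\<^sub>v v = t \<cdot>\<^sub>v v"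
    using Ac unfolding eigenvalue_def eigenvector_def by auto
  define r where "r = (\<Sum>i\<in>{0..<d}. vec_index v i *\<^sub>R f i)"
  have rR: "r \<in> R" unfolding r_def
    by (rule subspace_sum[OF R]) (use fB BR R in \<open>auto intro: subspace_scale\<close>)
  have sumB: "(\<Sum>i\<in>{0..<d}. g (f i)) = (\<Sum>b\<in>B. g b)" for g :: "real^'n \<Rightarrow> real^'n"
    using sum.reindex_bij_betw[OF f, of g] by simp
  have r0: "r \<noteq> 0"
  proof
    assume "r = 0"
    define c where "c b = vec_index v (inv_into {0..<d} f b)" for b
    have cf: "c (f i) = vec_index v i" if "i < d" for i
      using bij_betw_inv_into_left[OF f] that by (simp add: c_def)
    have "(\<Sum>b\<in>B. c b *\<^sub>R b) = r"
      unfolding r_def sumB[symmetric] by (rule sum.cong) (auto simp: cf)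
    then have "\<forall>b\<in>B. c b = 0" using \<open>r = 0\<close> indB independent_explicit by blast
    then have "\<forall>i<d. vec_index v i = 0" using cf fB by metis
    then have "v = 0\<^sub>v d" using v(1) by (intro eq_vecI) auto
    with v(2) show False by simp
  qed
  have Mf: "M *v f j = (\<Sum>i\<in>{0..<d}. A $$ (i,j) *\<^sub>R f i)" if "j < d" for j
  proof -
    have "M *v f j \<in> span B" using inv fB that BR RB by blast
    then have "M *v f j = (\<Sum>b\<in>B. representation B (M *v f j) b *\<^sub>R b)"
      using sum_representation_eq[OF indB _ finB] by simp
    also have "\<dots> = (\<Sum>i\<in>{0..<d}. representation B (M *v f j) (f i) *\<^sub>R f i)"
      using sumB[of "\<lambda>b. representation B (M *v f j) b *\<^sub>R b"] by simp
    finally show ?thesis using that by (simp add: A_def)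
  qed
  have "M *v r = (\<Sum>j\<in>{0..<d}. vec_index v j *\<^sub>R (M *v f j))"
    unfolding r_def by (simp add: mv_sum mv_scale)
  also have "\<dots> = (\<Sum>j\<in>{0..<d}. vec_index v j *\<^sub>R (\<Sum>i\<in>{0..<d}. A $$ (i,j) *\<^sub>R f i))"
    by (rule sum.cong) (auto simp: Mf)
  also have "\<dots> = (\<Sum>j\<in>{0..<d}. \<Sum>i\<in>{0..<d}. (A $$ (i,j) * vec_index v j) *\<^sub>R f i)"
    by (rule sum.cong) (simp_all add: scaleR_sum_right mult.commute)
  also have "\<dots> = (\<Sum>i\<in>{0..<d}. \<Sum>j\<in>{0..<d}. (A $$ (i,j) * vec_index v j) *\<^sub>R f i)"
    by (rule sum.swap)
  also have "\<dots> = (\<Sum>i\<in>{0..<d}. (\<Sum>j\<in>{0..<d}. A $$ (i,j) * vec_index v j) *\<^sub>R f i)"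
    by (rule sum.cong) (simp_all add: scaleR_sum_left)
  also have "\<dots> = (\<Sum>i\<in>{0..<d}. vec_index (A *\<^sub>v v) i *\<^sub>R f i)"
  proof (rule sum.cong)
    fix i assume i: "i \<in> {0..<d}"
    have "vec_index (A *\<^sub>v v) i = row A i \<bullet> v"
      using i Ac by (intro index_mult_mat_vec) auto
    also have "\<dots> = (\<Sum>j\<in>{0..<d}. vec_index (row A i) j * vec_index v j)"
      unfolding scalar_prod_def using v(1) by simp
    also have "\<dots> = (\<Sum>j\<in>{0..<d}. A $$ (i,j) * vec_index v j)"
      by (rule sum.cong) (use i Ac in auto)
    finally show "(\<Sum>j\<in>{0..<d}. A $$ (i,j) * vec_index v j) *\<^sub>R f i = vec_index (A *\<^sub>v v) i *\<^sub>R f i"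
      by simp
  qed simp
  also have "\<dots> = t *\<^sub>R r"
    unfolding r_def v(3) scaleR_sum_right by (rule sum.cong) (use v(1) in auto)
  finally show ?thesis using rR r0 by blast
qed

lemma matpow_add: "matpow M (a + b) = matpow M a ** matpow M b"
  by (induct a) (simp_all add: matrix_mul_assoc)

lemma matpow_comm: "M ** matpow M k = matpow M k ** M"
  by (metis matpow.simps(2) matpow_add add.commute plus_1_eq_Suc matpow.simps(1) matrix_mul_rid)

lemma matpow_double: "matpow (M ** M) k = matpow M (2 * k)"
proof (induct k)
  case 0 then show ?case by simp
next
  case (Suc k)
  have "matpow M (2 * Suc k) = M ** (M ** matpow M (2*k))" by (simp add: matrix_mul_assoc)
  then show ?case using Suc by (simp add: matrix_mul_assoc)
qed

lemma matpow_mult: "matpow M (a * b) = matpow (matpow M a) b"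
  by (induct b) (simp_all add: matpow_add)

lemma matpow_eig: "M *v v = c *\<^sub>R v \<Longrightarrow> matpow M k *v v = c ^ k *\<^sub>R v"
  by (induct k) (simp_all add: matrix_vector_mul_assoc[symmetric] mv_scale)

lemma matpow_inv: "(\<And>v. v \<in> V \<Longrightarrow> M *v v \<in> V) \<Longrightarrow> v \<in> V \<Longrightarrow> matpow M k *v v \<in> V"
  by (induct k) (simp_all add: matrix_vector_mul_assoc[symmetric])

lemma matpow_comm_vec: "(\<And>v. A *v (B *v v) = B *v (A *v v)) \<Longrightarrow> A *v (matpow B k *v v) = matpow B k *v (A *v v)"
  by (induct k arbitrary: v) (simp_all add: matrix_vector_mul_assoc[symmetric])

lemma real_root_unity: fixes c :: real assumes "c ^ j = 1" "j > 0" shows "c = 1 \<or> c = -1"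
proof -
  have "\<bar>c\<bar> ^ j = 1" using assms by (metis abs_one power_abs)
  then have "\<bar>c\<bar> ^ j = 1 ^ j" by simp
  then have "\<bar>c\<bar> = 1" using assms(2) power_eq_iff_eq_base[of j "\<bar>c\<bar>" 1] by simp
  then show ?thesis by auto
qed

lemma subspace_fix: "subspace V \<Longrightarrow> subspace {v\<in>V. (M::real^'n^'n) *v v = c *\<^sub>R v}"
  unfolding subspace_def by (auto simp: matrix_vector_right_distrib mv_scale algebra_simps)

lemma even_dim_noeig:
  fixes M :: "real^'n^'n"
  assumes "subspace R" "\<And>r. r \<in> R \<Longrightarrow> M *v r \<in> R" "\<And>r c. r \<in> R \<Longrightarrow> M *v r = c *\<^sub>R r \<Longrightarrow> r = 0"
  shows "even (dim R)"
proof (rule ccontr)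
  assume "\<not> even (dim R)"
  then obtain r c where "r \<in> R" "r \<noteq> 0" "M *v r = c *\<^sub>R r"
    using odd_dim_eigenvector[of R M] assms(1,2) by blast
  then show False using assms(3) by blast
qed

lemma pm_eigenspaces_odd:
  fixes M :: "real^'n^'n"
  assumes V: "subspace V" and Vinv: "\<And>v. v \<in> V \<Longrightarrow> M *v v \<in> V"
    and fo: "matpow M j = Finite_Cartesian_Product.mat 1" and j: "j > 0" and od: "odd (dim V)"
  shows "odd (dim {v\<in>V. M *v v = v}) \<or> odd (dim {v\<in>V. M *v v = - v})"
proof -
  define Y where "Y = M ** M"
  have Yj: "matpow Y j = Finite_Cartesian_Product.mat 1"
    unfolding Y_def matpow_double using fo by (simp add: matpow_add mult_2)
  have MY: "M *v (Y *v v) = Y *v (M *v v)" for v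
    by (simp add: Y_def matrix_vector_mul_assoc matrix_mul_assoc)
  have YV: "Y *v v \<in> V" if "v \<in> V" for v using Vinv that by (simp add: Y_def matrix_vector_mul_assoc[symmetric])
  define P where "P v = (\<Sum>i<j. matpow Y i *v v)" for v
  have PV: "P v \<in> V" if "v \<in> V" for v
    unfolding P_def by (rule subspace_sum[OF V]) (use matpow_inv[of V Y] YV that in auto)
  have P_add: "P (a + b) = P a + P b" for a b by (simp add: P_def matrix_vector_right_distrib sum.distrib)
  have P_scale: "P (c *\<^sub>R a) = c *\<^sub>R P a" for c a by (simp add: P_def mv_scale scaleR_sum_right)
  have P_diff: "P (a - b) = P a - P b" for a b by (simp add: P_def matrix_vector_mult_diff_distrib sum_subtractf)
  have YP: "Y *v P v = P v" for v
  proof -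
    obtain n where n: "j = Suc n" using j not0_implies_Suc by blast
    define f where "f i = matpow Y i *v v" for i
    have "Y *v P v = (\<Sum>i<j. f (Suc i))"
      by (simp add: P_def f_def mv_sum matrix_vector_mul_assoc)
    also have "\<dots> = (\<Sum>i<Suc n. f i) - f 0 + f (Suc n)"
    proof -
      have e1: "(\<Sum>i<Suc n. f (Suc i)) = (\<Sum>i<n. f (Suc i)) + f (Suc n)" by (rule sum.lessThan_Suc)
      have e2: "(\<Sum>i<Suc n. f i) = f 0 + (\<Sum>i<n. f (Suc i))" by (rule sum.lessThan_Suc_shift)
      show ?thesis unfolding n e1 e2 by simp
    qed
    also have "f (Suc n) = f 0" using Yj n by (simp add: f_def del: matpow.simps) simp
    finally show ?thesis by (simp add: P_def f_def n)
  qed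
  have PM: "P (M *v v) = M *v P v" for v
    by (simp add: P_def mv_sum matpow_comm_vec[of M Y, OF MY])
  have Pfix: "P v = real j *\<^sub>R v" if "Y *v v = v" for v
  proof -
    have "matpow Y i *v v = v" for i using matpow_eig[of Y v 1] that by simp
    then have "P v = (\<Sum>i<j. v)" by (simp add: P_def)
    then show ?thesis unfolding sum_constant_scaleR by simp
  qed
  have P0: "P 0 = 0" by (simp add: P_def)
  define K where "K = {v\<in>V. Y *v v = v}"
  define R where "R = {v\<in>V. P v = 0}"
  have sK: "subspace K" unfolding K_def using subspace_fix[OF V, of Y 1] by simp
  have sR: "subspace R" unfolding R_def subspace_def using subspace_0[OF V] subspace_add[OF V] subspace_scale[OF V]
    by (auto simp: P_add P_scale P0)
  have KR: "K \<inter> R = {0}"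
  proof -
    have "v = 0" if "v \<in> K" "v \<in> R" for v using that Pfix j by (auto simp: K_def R_def)
    then show ?thesis using subspace_0[OF sK] subspace_0[OF sR] by auto
  qed
  have sumKR: "{x + y |x y. x \<in> K \<and> y \<in> R} = V"
  proof
    show "{x + y |x y. x \<in> K \<and> y \<in> R} \<subseteq> V" using subspace_add[OF V] by (auto simp: K_def R_def)
    show "V \<subseteq> {x + y |x y. x \<in> K \<and> y \<in> R}"
    proof
      fix v assume v: "v \<in> V"
      define x where "x = (1 / real j) *\<^sub>R P v"
      have xK: "x \<in> K" unfolding x_def K_def using PV[OF v] subspace_scale[OF V] YP by (auto simp: mv_scale)
      have "P x = P v" unfolding x_def P_scale using Pfix[OF YP[of v]] j by simp
      then have "v - x \<in> R" unfolding R_def using subspace_diff[OF V v] xK K_def by (auto simp: P_diff)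
      then show "v \<in> {x + y |x y. x \<in> K \<and> y \<in> R}" using xK by force
    qed
  qed
  have d1: "dim V = dim K + dim R" using dim_sums_Int[OF sK sR] sumKR KR by simp
  have "even (dim R)"
  proof (rule even_dim_noeig[OF sR])
    show "M *v r \<in> R" if "r \<in> R" for r using that Vinv PM by (auto simp: R_def)
    show "r = 0" if r: "r \<in> R" "M *v r = c *\<^sub>R r" for r c
    proof (cases "r = 0")
      case False
      have "c ^ j *\<^sub>R r = r" using matpow_eig[OF r(2), of j] fo by simp
      then have "c ^ j = 1" using False by (metis scaleR_cancel_right scaleR_one)
      then have "c = 1 \<or> c = -1" using real_root_unity j by blast
      then have "Y *v r = r" using r(2) by (auto simp: Y_def matrix_vector_mul_assoc[symmetric] mv_scale)
      then have "r \<in> K \<inter> R" using r(1) by (auto simp: K_def R_def)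
      then show ?thesis using KR by auto
    qed simp
  qed
  define Kp where "Kp = {v\<in>V. M *v v = v}"
  define Km where "Km = {v\<in>V. M *v v = - v}"
  have sKp: "subspace Kp" unfolding Kp_def using subspace_fix[OF V, of M 1] by simp
  have sKm: "subspace Km" unfolding Km_def using subspace_fix[OF V, of M "-1"] by simp
  have KpKm: "Kp \<inter> Km = {0}"
  proof -
    have "v = 0" if "v \<in> Kp" "v \<in> Km" for v
    proof -
      have "v = - v" using that by (auto simp: Kp_def Km_def)
      then have "(2::real) *\<^sub>R v = 0" by (metis scaleR_2 left_minus)
      then show ?thesis by simp
    qed
    then show ?thesis using subspace_0[OF sKp] subspace_0[OF sKm] by auto
  qed
  have sumK: "{x + y |x y. x \<in> Kp \<and> y \<in> Km} = K"
  proof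
    show "{x + y |x y. x \<in> Kp \<and> y \<in> Km} \<subseteq> K" using subspace_add[OF V]
      by (auto simp: K_def Kp_def Km_def Y_def matrix_vector_mul_assoc[symmetric] matrix_vector_right_distrib matrix_vector_mult_diff_distrib)
    show "K \<subseteq> {x + y |x y. x \<in> Kp \<and> y \<in> Km}"
    proof
      fix v assume v: "v \<in> K"
      then have vV: "v \<in> V" and Yv: "M *v (M *v v) = v" by (auto simp: K_def Y_def matrix_vector_mul_assoc[symmetric])
      define x where "x = (1/2) *\<^sub>R (v + M *v v)"
      define y where "y = (1/2) *\<^sub>R (v - M *v v)"
      have "x \<in> Kp" unfolding x_def Kp_def using vV Vinv subspace_add[OF V] subspace_scale[OF V] Yv
        by (auto simp: mv_scale matrix_vector_right_distrib)
      moreover have "y \<in> Km" unfolding y_def Km_def using vV Vinv subspace_diff[OF V] subspace_scale[OF V] Yv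
        by (auto simp: mv_scale matrix_vector_mult_diff_distrib algebra_simps)
      moreover have "v = x + y" unfolding x_def y_def by (simp add: algebra_simps scaleR_2[symmetric])
      ultimately show "v \<in> {x + y |x y. x \<in> Kp \<and> y \<in> Km}" by blast
    qed
  qed
  have d2: "dim K = dim Kp + dim Km" using dim_sums_Int[OF sKp sKm] sumK KpKm by simp
  have "dim V = dim Kp + dim Km + dim R" using d1 d2 by simp
  then have "odd (dim Kp) \<or> odd (dim Km)" using od \<open>even (dim R)\<close> by presburger
  then show ?thesis unfolding Kp_def Km_def .
qed

lemma common_pm_eigenvector:
  fixes S :: "(real^'n^'n) set"
  assumes "finite S"
  shows "subspace V \<Longrightarrow> odd (dim V) \<Longrightarrow> (\<forall>M\<in>S. \<forall>v\<in>V. M *v v \<in> V) \<Longrightarrow>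
    (\<forall>M\<in>S. \<exists>j>0. matpow M j = Finite_Cartesian_Product.mat 1) \<Longrightarrow>
    (\<forall>M\<in>S. \<forall>M'\<in>S. \<forall>v\<in>V. M *v (M' *v v) = M' *v (M *v v)) \<Longrightarrow>
    \<exists>v\<in>V. v \<noteq> 0 \<and> (\<forall>M\<in>S. M *v v = v \<or> M *v v = - v)"
  using assms
proof (induct S arbitrary: V rule: finite_induct)
  case empty
  have "dim V \<noteq> 0" using empty(2) by (intro notI) simp
  then have "\<not> V \<subseteq> {0}" by simp
  then obtain v where "v \<in> V" "v \<noteq> 0" by blast
  then show ?case by blast
next
  case (insert M S)
  obtain j where j: "j > 0" "matpow M j = Finite_Cartesian_Product.mat 1" using insert.prems(4) by blast
  have MV: "\<And>v. v \<in> V \<Longrightarrow> M *v v \<in> V" using insert.prems(3) by blast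
  have comm: "\<And>M'. M' \<in> S \<Longrightarrow> v \<in> V \<Longrightarrow> M *v (M' *v v) = M' *v (M *v v)" for v
    using insert.prems(5) by blast
  have "odd (dim {v\<in>V. M *v v = (1::real) *\<^sub>R v}) \<or> odd (dim {v\<in>V. M *v v = (-1::real) *\<^sub>R v})"
    using pm_eigenspaces_odd[OF insert.prems(1) MV j(2) j(1) insert.prems(2)] by simp
  then obtain c :: real where c: "c = 1 \<or> c = -1" and oddW: "odd (dim {v\<in>V. M *v v = c *\<^sub>R v})"
    by blast
  define W where "W = {v\<in>V. M *v v = c *\<^sub>R v}"
  have sW: "subspace W" unfolding W_def by (rule subspace_fix[OF insert.prems(1)])
  have "\<forall>M'\<in>S. \<forall>v\<in>W. M' *v v \<in> W"
    using insert.prems(3) comm by (auto simp: W_def mv_scale)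
  moreover have "\<forall>M'\<in>S. \<forall>M''\<in>S. \<forall>v\<in>W. M' *v (M'' *v v) = M'' *v (M' *v v)"
    using insert.prems(5) by (auto simp: W_def)
  ultimately obtain v where v: "v \<in> W" "v \<noteq> 0" "\<forall>M'\<in>S. M' *v v = v \<or> M' *v v = - v"
    using insert.hyps(3)[OF sW oddW[folded W_def]] insert.prems(4) by blast
  then have "M *v v = v \<or> M *v v = - v" using c by (auto simp: W_def)
  then show ?case using v by (auto simp: W_def)
qed


context group begin

lemma sig_inv:
  assumes hom: "\<forall>x\<in>carrier G. \<forall>y\<in>carrier G. \<sigma> (x \<otimes> y) = \<sigma> x ** \<sigma> y"
    and one: "\<sigma> \<one> = Finite_Cartesian_Product.mat 1" and x: "x \<in> carrier G"
  shows "\<sigma> (inv x) ** \<sigma> x = Finite_Cartesian_Product.mat 1" "\<sigma> x ** \<sigma> (inv x) = Finite_Cartesian_Product.mat 1"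
  using hom x one by (metis inv_closed l_inv r_inv)+

lemma sig_pow:
  assumes hom: "\<forall>x\<in>carrier G. \<forall>y\<in>carrier G. \<sigma> (x \<otimes> y) = \<sigma> x ** \<sigma> y"
    and one: "\<sigma> \<one> = Finite_Cartesian_Product.mat 1" and x: "x \<in> carrier G"
  shows "\<sigma> (x [^] (n::nat)) = matpow (\<sigma> x) n"
proof (induct n)
  case 0 then show ?case using one by simp
next
  case (Suc n)
  have "\<sigma> (x [^] Suc n) = \<sigma> (x [^] n) ** \<sigma> x" using hom x by simp
  then show ?case using Suc by (simp add: matpow_comm)
qed

lemma sig_fo:
  assumes hom: "\<forall>x\<in>carrier G. \<forall>y\<in>carrier G. \<sigma> (x \<otimes> y) = \<sigma> x ** \<sigma> y"
    and one: "\<sigma> \<one> = Finite_Cartesian_Product.mat 1" and fin: "finite (carrier G)" and x: "x \<in> carrier G"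
  shows "matpow (\<sigma> x) (order G) = Finite_Cartesian_Product.mat 1"
  using sig_pow[OF hom one x, of "order G"] pow_order_eq_1[OF x] one by simp

lemma order_pos: "finite (carrier G) \<Longrightarrow> order G > 0"
  unfolding order_def using one_closed by (metis card_gt_0_iff empty_iff)

lemma conj_mult:
  assumes hom: "\<forall>x\<in>carrier G. \<forall>y\<in>carrier G. \<sigma> (x \<otimes> y) = \<sigma> x ** \<sigma> y"
    and "a \<in> carrier G" "b \<in> carrier G" "a' \<in> carrier G" "b' \<in> carrier G"
    and "\<sigma> a ** h = h ** \<sigma> a'" "\<sigma> b ** h = h ** \<sigma> b'"
  shows "\<sigma> (a \<otimes> b) ** h = h ** \<sigma> (a' \<otimes> b')"
proof -
  have "\<sigma> (a \<otimes> b) ** h = \<sigma> a ** (\<sigma> b ** h)" using hom assms(2,3) by (simp add: matrix_mul_assoc)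
  also have "\<dots> = (\<sigma> a ** h) ** \<sigma> b'" using assms(7) by (simp add: matrix_mul_assoc)
  also have "\<dots> = h ** (\<sigma> a' ** \<sigma> b')" using assms(6) by (simp add: matrix_mul_assoc)
  also have "\<dots> = h ** \<sigma> (a' \<otimes> b')" using hom assms(4,5) by simp
  finally show ?thesis .
qed

lemma conj_inv:
  assumes hom: "\<forall>x\<in>carrier G. \<forall>y\<in>carrier G. \<sigma> (x \<otimes> y) = \<sigma> x ** \<sigma> y"
    and one: "\<sigma> \<one> = Finite_Cartesian_Product.mat 1"
    and "a \<in> carrier G" "a' \<in> carrier G" "\<sigma> a ** h = h ** \<sigma> a'"
  shows "\<sigma> (inv a) ** h = h ** \<sigma> (inv a')"
proof -
  have i1: "\<sigma> a' ** \<sigma> (inv a') = Finite_Cartesian_Product.mat 1" using sig_inv(2)[OF hom one assms(4)] .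
  have i2: "\<sigma> (inv a) ** \<sigma> a = Finite_Cartesian_Product.mat 1" using sig_inv(1)[OF hom one assms(3)] .
  have "\<sigma> (inv a) ** h = \<sigma> (inv a) ** h ** (\<sigma> a' ** \<sigma> (inv a'))"
    by (simp only: i1 matrix_mul_rid)
  also have "\<dots> = \<sigma> (inv a) ** (h ** \<sigma> a') ** \<sigma> (inv a')"
    by (simp only: matrix_mul_assoc)
  also have "\<dots> = \<sigma> (inv a) ** (\<sigma> a ** h) ** \<sigma> (inv a')"
    by (simp only: assms(5))
  also have "\<dots> = (\<sigma> (inv a) ** \<sigma> a) ** h ** \<sigma> (inv a')"
    by (simp only: matrix_mul_assoc)
  also have "\<dots> = h ** \<sigma> (inv a')"
    by (simp only: i2 matrix_mul_lid)
  finally show ?thesis .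
qed

lemma pow_conj:
  assumes hom: "\<forall>x\<in>carrier G. \<forall>y\<in>carrier G. \<sigma> (x \<otimes> y) = \<sigma> x ** \<sigma> y"
    and one: "\<sigma> \<one> = Finite_Cartesian_Product.mat 1"
    and norm1: "\<forall>k\<in>carrier G. \<exists>k'\<in>carrier G. h ** \<sigma> k = \<sigma> k' ** h"
    and c: "c \<in> carrier G"
  shows "\<exists>c'\<in>carrier G. matpow (\<sigma> c ** h) n = \<sigma> c' ** matpow h n"
proof (induct n)
  case 0 then show ?case using one by (intro bexI[of _ \<one>]) simp_all
next
  case (Suc n)
  then obtain c' where c': "c' \<in> carrier G" "matpow (\<sigma> c ** h) n = \<sigma> c' ** matpow h n" by blast
  obtain k' where k': "k' \<in> carrier G" "h ** \<sigma> c' = \<sigma> k' ** h" using norm1 c'(1) by blast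
  have "matpow (\<sigma> c ** h) (Suc n) = \<sigma> c ** (h ** \<sigma> c') ** matpow h n"
    using c' by (simp add: matrix_mul_assoc)
  also have "\<dots> = \<sigma> (c \<otimes> k') ** matpow h (Suc n)"
    using k' c hom by (simp add: matrix_mul_assoc)
  finally show ?case using c k'(1) by blast
qed

lemma fo_conj:
  assumes hom: "\<forall>x\<in>carrier G. \<forall>y\<in>carrier G. \<sigma> (x \<otimes> y) = \<sigma> x ** \<sigma> y"
    and one: "\<sigma> \<one> = Finite_Cartesian_Product.mat 1" and fin: "finite (carrier G)"
    and norm1: "\<forall>k\<in>carrier G. \<exists>k'\<in>carrier G. h ** \<sigma> k = \<sigma> k' ** h"
    and c: "c \<in> carrier G" and hj: "matpow h j = Finite_Cartesian_Product.mat 1" "j > 0"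
  shows "matpow (\<sigma> c ** h) (j * order G) = Finite_Cartesian_Product.mat 1" "j * order G > 0"
proof -
  obtain c' where c': "c' \<in> carrier G" "matpow (\<sigma> c ** h) j = \<sigma> c' ** matpow h j"
    using pow_conj[OF hom one norm1 c] by blast
  show "matpow (\<sigma> c ** h) (j * order G) = Finite_Cartesian_Product.mat 1"
    unfolding matpow_mult using c' hj sig_fo[OF hom one fin c'(1)] by simp
  show "j * order G > 0" using hj order_pos[OF fin] by simp
qed

lemma inv_cancel_vec:
  assumes hom: "\<forall>x\<in>carrier G. \<forall>y\<in>carrier G. \<sigma> (x \<otimes> y) = \<sigma> x ** \<sigma> y"
    and one: "\<sigma> \<one> = Finite_Cartesian_Product.mat 1" and x: "x \<in> carrier G"
  shows "\<sigma> (inv x) *v (\<sigma> x *v u) = u" "\<sigma> x *v (\<sigma> (inv x) *v u) = u"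
  using sig_inv[OF hom one x] by (simp_all add: matrix_vector_mul_assoc)

lemma exists_N:
  assumes hom: "\<forall>x\<in>carrier G. \<forall>y\<in>carrier G. \<sigma> (x \<otimes> y) = \<sigma> x ** \<sigma> y"
    and one: "\<sigma> \<one> = Finite_Cartesian_Product.mat 1" and solv: "solvable G"
    and Vinv: "\<forall>k\<in>carrier G. \<forall>v\<in>V. \<sigma> k *v v \<in> V"
    and nontriv: "\<exists>k\<in>carrier G. \<exists>v\<in>V. \<sigma> k *v v \<noteq> v"
    and norm2: "\<forall>k\<in>carrier G. \<exists>k'\<in>carrier G. \<sigma> k ** h = h ** \<sigma> k'"
  shows "\<exists>N. N \<subseteq> carrier G \<and> (\<forall>a\<in>carrier G. \<forall>x\<in>N. a \<otimes> x \<otimes> inv a \<in> N) \<and>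
    (\<forall>x\<in>N. \<exists>y\<in>N. \<sigma> x ** h = h ** \<sigma> y) \<and>
    (\<forall>x\<in>N. \<forall>y\<in>N. \<forall>v\<in>V. \<sigma> x *v (\<sigma> y *v v) = \<sigma> y *v (\<sigma> x *v v)) \<and>
    (\<exists>x\<in>N. \<exists>v\<in>V. \<sigma> x *v v \<noteq> v)"
proof -
  define D where "D k = (derived G ^^ k) (carrier G)" for k
  have Dsub: "D k \<subseteq> carrier G" for k unfolding D_def by (rule exp_of_derived_in_carrier) simp
  have Dnorm: "D k \<lhd> G" for k
  proof (induct k)
    case 0 show ?case by (simp add: D_def normal_self)
  next
    case (Suc k) then show ?case unfolding D_def by (simp add: derived_is_normal)
  qed
  have Dconj: "\<forall>x\<in>D k. \<exists>y\<in>D k. \<sigma> x ** h = h ** \<sigma> y" for k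
  proof (induct k)
    case 0 show ?case using norm2 by (simp add: D_def)
  next
    case (Suc k)
    have dsc: "derived_set G (D k) \<subseteq> carrier G" by (rule derived_set_in_carrier[OF Dsub])
    have gsc: "generate G (derived_set G (D k)) \<subseteq> carrier G" using generate_in_carrier[OF dsc] by blast
    have gen: "\<exists>y\<in>derived_set G (D k). \<sigma> g ** h = h ** \<sigma> y" if g: "g \<in> derived_set G (D k)" for g
    proof -
      from g obtain h1 h2 where hh: "h1 \<in> D k" "h2 \<in> D k" "g = h1 \<otimes> h2 \<otimes> inv h1 \<otimes> inv h2" by auto
      obtain y1 where y1: "y1 \<in> D k" "\<sigma> h1 ** h = h ** \<sigma> y1" using Suc hh by blast
      obtain y2 where y2: "y2 \<in> D k" "\<sigma> h2 ** h = h ** \<sigma> y2" using Suc hh by blast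
      have c: "h1 \<in> carrier G" "h2 \<in> carrier G" "y1 \<in> carrier G" "y2 \<in> carrier G"
        using hh y1 y2 Dsub by auto
      have i1: "\<sigma> (inv h1) ** h = h ** \<sigma> (inv y1)" by (rule conj_inv[OF hom one c(1) c(3) y1(2)])
      have i2: "\<sigma> (inv h2) ** h = h ** \<sigma> (inv y2)" by (rule conj_inv[OF hom one c(2) c(4) y2(2)])
      have "\<sigma> (h1 \<otimes> h2) ** h = h ** \<sigma> (y1 \<otimes> y2)" by (rule conj_mult[OF hom c y1(2) y2(2)])
      then have "\<sigma> (h1 \<otimes> h2 \<otimes> inv h1) ** h = h ** \<sigma> (y1 \<otimes> y2 \<otimes> inv y1)"
        using c by (intro conj_mult[OF hom _ _ _ _ _ i1]) auto
      then have "\<sigma> (h1 \<otimes> h2 \<otimes> inv h1 \<otimes> inv h2) ** h = h ** \<sigma> (y1 \<otimes> y2 \<otimes> inv y1 \<otimes> inv y2)"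
        using c by (intro conj_mult[OF hom _ _ _ _ _ i2]) auto
      moreover have "y1 \<otimes> y2 \<otimes> inv y1 \<otimes> inv y2 \<in> derived_set G (D k)" using y1 y2 by blast
      ultimately show ?thesis using hh by blast
    qed
    have "\<exists>y\<in>generate G (derived_set G (D k)). \<sigma> x ** h = h ** \<sigma> y"
      if "x \<in> generate G (derived_set G (D k))" for x
      using that
    proof (induct rule: generate.induct)
      case one
      show ?case using assms(2) by (intro bexI[of _ \<one>]) (simp_all add: generate.one)
    next
      case (incl g)
      then show ?case using gen by (meson generate.incl)
    next
      case (inv g)
      obtain y where y: "y \<in> derived_set G (D k)" "\<sigma> g ** h = h ** \<sigma> y" using gen inv by blast
      have gc: "g \<in> carrier G" using subsetD[OF dsc inv] .
      have yc: "y \<in> carrier G" using subsetD[OF dsc y(1)] .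
      have "\<sigma> (inv g) ** h = h ** \<sigma> (inv y)"
        by (rule conj_inv[OF hom assms(2) gc yc y(2)])
      then show ?case by (rule bexI[OF _ generate.inv[OF y(1)]])
    next
      case (eng g1 g2)
      obtain y1 y2 where y: "y1 \<in> generate G (derived_set G (D k))" "\<sigma> g1 ** h = h ** \<sigma> y1"
        "y2 \<in> generate G (derived_set G (D k))" "\<sigma> g2 ** h = h ** \<sigma> y2" using eng(2,4) by meson
      have cc: "g1 \<in> carrier G" "g2 \<in> carrier G" "y1 \<in> carrier G" "y2 \<in> carrier G"
        using subsetD[OF gsc] y(1,3) eng(1,3) by auto
      have "\<sigma> (g1 \<otimes> g2) ** h = h ** \<sigma> (y1 \<otimes> y2)"
        by (rule conj_mult[OF hom cc y(2) y(4)])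
      then show ?case by (rule bexI[OF _ generate.eng[OF y(1) y(3)]])
    qed
    then show ?case by (simp add: D_def derived_def)
  qed
  obtain n where n: "D n = {\<one>}"
    using solv solvable_imp_trivial_derived_seq[of "carrier G"] unfolding solvable_def D_def by blast
  define P where "P k \<longleftrightarrow> (\<forall>x\<in>D k. \<forall>v\<in>V. \<sigma> x *v v = v)" for k
  have Pn: "P n" using n one by (simp add: P_def)
  have nP0: "\<not> P 0" using nontriv by (auto simp: P_def D_def)
  define m where "m = (LEAST k. P k)"
  have Pm: "P m" using LeastI[of P n] Pn m_def by simp
  have m0: "m \<noteq> 0" using Pm nP0 by (intro notI) simp
  have nPm1: "\<not> P (m - 1)" using not_less_Least[of "m-1" P] m0 m_def by simp
  define N where "N = D (m - 1)"
  have DmN: "D m = derived G N" using m0 by (cases m) (simp_all add: D_def N_def)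
  have Nsub: "N \<subseteq> carrier G" using Dsub N_def by simp
  have comm: "\<sigma> x *v (\<sigma> y *v v) = \<sigma> y *v (\<sigma> x *v v)" if xy: "x \<in> N" "y \<in> N" and v: "v \<in> V" for x y v
  proof -
    have c: "x \<in> carrier G" "y \<in> carrier G" using xy Nsub by auto
    define c where "c = x \<otimes> y \<otimes> inv x \<otimes> inv y"
    have "c \<in> derived_set G N" using xy unfolding c_def by blast
    then have "c \<in> D m" unfolding DmN derived_def by (rule generate.incl)
    moreover have w: "\<sigma> y *v (\<sigma> x *v v) \<in> V" using Vinv c v by blast
    ultimately have "\<sigma> c *v (\<sigma> y *v (\<sigma> x *v v)) = \<sigma> y *v (\<sigma> x *v v)" using Pm by (simp add: P_def)
    moreover have "\<sigma> c = \<sigma> x ** \<sigma> y ** \<sigma> (inv x) ** \<sigma> (inv y)"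
      using hom c unfolding c_def by simp
    moreover have "\<sigma> x *v (\<sigma> y *v (\<sigma> (inv x) *v (\<sigma> (inv y) *v (\<sigma> y *v (\<sigma> x *v v))))) = \<sigma> x *v (\<sigma> y *v v)"
      using inv_cancel_vec[OF hom one c(1)] inv_cancel_vec[OF hom one c(2)] by simp
    ultimately show ?thesis by (simp add: matrix_vector_mul_assoc[symmetric])
  qed
  have nrm: "\<forall>a\<in>carrier G. \<forall>x\<in>N. a \<otimes> x \<otimes> inv a \<in> N"
    using normal.inv_op_closed2[OF Dnorm] N_def by blast
  have nt: "\<exists>x\<in>N. \<exists>v\<in>V. \<sigma> x *v v \<noteq> v" using nPm1 unfolding P_def N_def by blast
  have cj: "\<forall>x\<in>N. \<exists>y\<in>N. \<sigma> x ** h = h ** \<sigma> y" using Dconj[of "m - 1"] unfolding N_def .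
  have cm: "\<forall>x\<in>N. \<forall>y\<in>N. \<forall>v\<in>V. \<sigma> x *v (\<sigma> y *v v) = \<sigma> y *v (\<sigma> x *v v)" using comm by blast
  show ?thesis by (rule exI[of _ N]) (intro conjI Nsub nrm cj cm nt)
qed

end


lemma span_inv_mat:
  fixes M :: "real^'n^'n"
  assumes "\<forall>u\<in>X. M *v u \<in> span X" "b \<in> span X"
  shows "M *v b \<in> span X"
  using assms(2)
proof (induct rule: span_induct_alt)
  case base then show ?case by (simp add: span_zero)
next
  case (step c x y)
  then show ?case using assms(1)
    by (simp add: matrix_vector_right_distrib mv_scale span_add span_scale)
qed

lemma (in group) solvable_subgroup_grp:
  assumes H: "subgroup H G" and solv: "solvable G"
  shows "solvable (G\<lparr>carrier := H\<rparr>)"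
proof -
  obtain n where n: "(derived G ^^ n) H = {\<one>}"
    using solvable_imp_trivial_derived_seq[OF solvable_subgroup[OF H solv]] by blast
  interpret K: group "G\<lparr>carrier := H\<rparr>" by (rule subgroup_imp_group[OF H])
  have sub: "(derived G ^^ k) H \<subseteq> H" for k
    by (induct k) (simp_all add: derived_incl[OF _ H])
  have eq: "(derived (G\<lparr>carrier := H\<rparr>) ^^ k) H = (derived G ^^ k) H" for k
  proof (induct k)
    case 0 then show ?case by simp
  next
    case (Suc k) then show ?case using derived_consistent[OF sub[of k] H] by simp
  qed
  show ?thesis
    unfolding K.solvable_iff_trivial_derived_seq using eq[of n] n by (intro exI[of _ n]) simp
qed

definition hypo :: "('a, 'b) monoid_scheme \<Rightarrow> ('a \<Rightarrow> real^'n^'n) \<Rightarrow> (real^'n) set \<Rightarrow> real^'n^'n \<Rightarrow> bool" where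
  "hypo G \<sigma> V h \<longleftrightarrow> group G \<and> finite (carrier G) \<and> solvable G \<and>
     (\<forall>x\<in>carrier G. \<forall>y\<in>carrier G. \<sigma> (x \<otimes>\<^bsub>G\<^esub> y) = \<sigma> x ** \<sigma> y) \<and> \<sigma> \<one>\<^bsub>G\<^esub> = Finite_Cartesian_Product.mat 1 \<and>
     subspace V \<and> odd (dim V) \<and> (\<forall>k\<in>carrier G. \<forall>v\<in>V. \<sigma> k *v v \<in> V) \<and>
     (\<forall>U. subspace U \<and> U \<subseteq> V \<and> (\<forall>k\<in>carrier G. \<forall>u\<in>U. \<sigma> k *v u \<in> U) \<longrightarrow> U = {0} \<or> U = V) \<and>
     (\<exists>k\<in>carrier G. \<exists>v\<in>V. \<sigma> k *v v \<noteq> v) \<and>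
     (\<exists>j>0. matpow h j = Finite_Cartesian_Product.mat 1) \<and> (\<forall>v\<in>V. h *v v \<in> V) \<and>
     (\<forall>k\<in>carrier G. \<exists>k'\<in>carrier G. h ** \<sigma> k = \<sigma> k' ** h) \<and>
     (\<forall>k\<in>carrier G. \<exists>k'\<in>carrier G. \<sigma> k ** h = h ** \<sigma> k')"

definition concl :: "('a, 'b) monoid_scheme \<Rightarrow> ('a \<Rightarrow> real^'n^'n) \<Rightarrow> (real^'n) set \<Rightarrow> real^'n^'n \<Rightarrow> bool" where
  "concl G \<sigma> V h \<longleftrightarrow> (\<exists>k\<in>carrier G. \<exists>v\<in>V. v \<noteq> 0 \<and> \<sigma> k *v (h *v v) = v)"

locale stepctx = group G for G :: "('a, 'b) monoid_scheme" (structure) +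
  fixes \<sigma> :: "'a \<Rightarrow> real^'n^'n" and V :: "(real^'n) set" and h :: "real^'n^'n" and N :: "'a set" and j :: nat
  assumes fin: "finite (carrier G)"
  and hom: "\<forall>x\<in>carrier G. \<forall>y\<in>carrier G. \<sigma> (x \<otimes> y) = \<sigma> x ** \<sigma> y"
  and one: "\<sigma> \<one> = Finite_Cartesian_Product.mat 1"
  and V: "subspace V" and od: "odd (dim V)"
  and Vinv: "\<forall>k\<in>carrier G. \<forall>v\<in>V. \<sigma> k *v v \<in> V"
  and irr: "\<forall>U. subspace U \<and> U \<subseteq> V \<and> (\<forall>k\<in>carrier G. \<forall>u\<in>U. \<sigma> k *v u \<in> U) \<longrightarrow> U = {0} \<or> U = V"
  and hj: "matpow h j = Finite_Cartesian_Product.mat 1" and jpos: "j > 0" and hV: "\<forall>v\<in>V. h *v v \<in> V"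
  and norm1: "\<forall>k\<in>carrier G. \<exists>k'\<in>carrier G. h ** \<sigma> k = \<sigma> k' ** h"
  and norm2: "\<forall>k\<in>carrier G. \<exists>k'\<in>carrier G. \<sigma> k ** h = h ** \<sigma> k'"
  and Nsub: "N \<subseteq> carrier G" and Nnorm: "\<forall>a\<in>carrier G. \<forall>x\<in>N. a \<otimes> x \<otimes> inv a \<in> N"
  and Nconj: "\<forall>x\<in>N. \<exists>y\<in>N. \<sigma> x ** h = h ** \<sigma> y"
  and Ncomm: "\<forall>x\<in>N. \<forall>y\<in>N. \<forall>v\<in>V. \<sigma> x *v (\<sigma> y *v v) = \<sigma> y *v (\<sigma> x *v v)"
  and Nnt: "\<exists>x\<in>N. \<exists>v\<in>V. \<sigma> x *v v \<noteq> v"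
begin

definition Lam :: "('a \<Rightarrow> real) set" where "Lam = N \<rightarrow>\<^sub>E {1, -1}"
definition W :: "('a \<Rightarrow> real) \<Rightarrow> (real^'n) set" where "W l = {v\<in>V. \<forall>x\<in>N. \<sigma> x *v v = l x *\<^sub>R v}"
definition cj :: "'a \<Rightarrow> ('a \<Rightarrow> real) \<Rightarrow> ('a \<Rightarrow> real)" where "cj a l = (\<lambda>x\<in>N. l (inv a \<otimes> x \<otimes> a))"
definition orb :: "('a \<Rightarrow> real) \<Rightarrow> ('a \<Rightarrow> real) set" where "orb l = (\<lambda>a. cj a l) ` carrier G"

lemma finN: "finite N" using fin Nsub finite_subset by blast
lemma finLam: "finite Lam" unfolding Lam_def using finN by (intro finite_PiE) auto

lemma W_sub: "subspace (W l)"
  unfolding W_def subspace_def using subspace_0[OF V] subspace_add[OF V] subspace_scale[OF V]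
  by (auto simp: matrix_vector_right_distrib mv_scale scaleR_add_right)

lemma W_V: "W l \<subseteq> V" unfolding W_def by auto

lemma cj_Lam: assumes "a \<in> carrier G" "l \<in> Lam" shows "cj a l \<in> Lam"
proof -
  have "inv a \<otimes> x \<otimes> a \<in> N" if "x \<in> N" for x
    using Nnorm assms(1) that by (metis inv_closed inv_inv)
  then show ?thesis using assms(2) unfolding Lam_def cj_def by (auto simp: PiE_iff)
qed

lemma cj_W: assumes a: "a \<in> carrier G" and w: "w \<in> W l" shows "\<sigma> a *v w \<in> W (cj a l)"
proof -
  have wV: "w \<in> V" using w W_def by auto
  have "\<sigma> x *v (\<sigma> a *v w) = cj a l x *\<^sub>R (\<sigma> a *v w)" if x: "x \<in> N" for x
  proof -
    have xc: "x \<in> carrier G" using x Nsub by auto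
    have xn: "inv a \<otimes> x \<otimes> a \<in> N" using Nnorm a x by (metis inv_closed inv_inv)
    have "a \<otimes> (inv a \<otimes> x \<otimes> a) = x \<otimes> a" using a xc by (simp add: m_assoc[symmetric])
    then have "\<sigma> a ** \<sigma> (inv a \<otimes> x \<otimes> a) = \<sigma> x ** \<sigma> a" using hom a xc by (metis inv_closed m_closed)
    then have "\<sigma> x *v (\<sigma> a *v w) = \<sigma> a *v (\<sigma> (inv a \<otimes> x \<otimes> a) *v w)"
      by (metis matrix_vector_mul_assoc)
    also have "\<dots> = l (inv a \<otimes> x \<otimes> a) *\<^sub>R (\<sigma> a *v w)" using w xn by (simp add: W_def mv_scale)
    finally show ?thesis using x by (simp add: cj_def)
  qed
  then show ?thesis using Vinv a wV by (simp add: W_def)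
qed

lemma cj_cj: assumes "a \<in> carrier G" "b \<in> carrier G" shows "cj b (cj a l) = cj (b \<otimes> a) l"
proof
  fix x show "cj b (cj a l) x = cj (b \<otimes> a) l x"
  proof (cases "x \<in> N")
    case True
    then have xc: "x \<in> carrier G" using Nsub by auto
    have xn: "inv b \<otimes> x \<otimes> b \<in> N" using Nnorm assms True by (metis inv_closed inv_inv)
    have "inv a \<otimes> (inv b \<otimes> x \<otimes> b) \<otimes> a = inv (b \<otimes> a) \<otimes> x \<otimes> (b \<otimes> a)"
      using assms xc by (simp add: inv_mult_group m_assoc)
    then show ?thesis using True xn by (simp add: cj_def)
  qed (simp add: cj_def)
qed

lemma cj_one: assumes "l \<in> Lam" shows "cj \<one> l = l"
proof
  fix x show "cj \<one> l x = l x"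
    using assms Nsub by (cases "x \<in> N") (auto simp: cj_def Lam_def PiE_def extensional_def)
qed

lemma W_inv_N: assumes "x \<in> N" "u \<in> W l" shows "\<sigma> x *v u \<in> W l"
proof -
  have "\<sigma> x *v u = l x *\<^sub>R u" using assms by (simp add: W_def)
  then show ?thesis using subspace_scale[OF W_sub assms(2)] by simp
qed

lemma indep:
  assumes "finite S"
  shows "S \<subseteq> Lam \<Longrightarrow> l \<in> Lam \<Longrightarrow> l \<notin> S \<Longrightarrow> W l \<inter> span (\<Union>(W ` S)) \<subseteq> {0}"
  using assms
proof (induct S rule: finite_induct)
  case empty then show ?case by simp
next
  case (insert mu S)
  show ?case
  proof
    fix w assume w: "w \<in> W l \<inter> span (\<Union>(W ` insert mu S))"
    have "span (\<Union>(W ` insert mu S)) = span (W mu \<union> \<Union>(W ` S))" by simp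
    then obtain a b where ab: "a \<in> span (W mu)" "b \<in> span (\<Union>(W ` S))" "w = a + b"
      using w span_Un by blast
    have e1: "span (W mu) = W mu" by (rule span_subspace[OF subset_refl span_superset W_sub])
    have aW: "a \<in> W mu" using ab(1) unfolding e1 .
    have muL: "mu \<in> Lam" using insert(4) by blast
    have lL: "l \<in> Lam" using insert(5) .
    have SL: "S \<subseteq> Lam" using insert(4) by blast
    have lS: "l \<notin> S" using insert(6) by blast
    have "mu \<noteq> l" using insert(6) by blast
    then obtain x where x: "x \<in> N" "l x \<noteq> mu x"
    proof -
      assume r: "\<And>x. x \<in> N \<Longrightarrow> l x \<noteq> mu x \<Longrightarrow> thesis"
      show thesis
      proof (rule ccontr)
        assume "\<not> thesis"
        then have "\<forall>x\<in>N. l x = mu x" using r by blast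
        then have "l = mu" using PiE_ext[of l N "\<lambda>_. {1, -1}" mu] lL muL unfolding Lam_def by blast
        then show False using \<open>mu \<noteq> l\<close> by simp
      qed
    qed
    have inv: "\<forall>u\<in>\<Union>(W ` S). \<sigma> x *v u \<in> span (\<Union>(W ` S))"
      using W_inv_N[OF x(1)] by (blast intro: span_base)
    have sxb: "\<sigma> x *v b \<in> span (\<Union>(W ` S))" by (rule span_inv_mat[OF inv ab(2)])
    have "w \<in> W l" using w by blast
    then have "\<sigma> x *v w = l x *\<^sub>R w" using x(1) unfolding W_def by blast
    moreover have "\<sigma> x *v a = mu x *\<^sub>R a" using aW x(1) unfolding W_def by blast
    ultimately have "mu x *\<^sub>R a + \<sigma> x *v b = l x *\<^sub>R a + l x *\<^sub>R b"
      using ab(3) by (simp add: matrix_vector_right_distrib scaleR_add_right)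
    then have eq: "(l x - mu x) *\<^sub>R a = \<sigma> x *v b - l x *\<^sub>R b" by (simp add: algebra_simps)
    have c0: "l x - mu x \<noteq> 0" using x(2) by simp
    have "(1 / (l x - mu x)) *\<^sub>R ((l x - mu x) *\<^sub>R a) = a" using c0 by simp
    then have "a = (1 / (l x - mu x)) *\<^sub>R (\<sigma> x *v b - l x *\<^sub>R b)" unfolding eq by simp
    then have "a \<in> span (\<Union>(W ` S))" using sxb ab(2) by (simp add: span_diff span_scale)
    then have "w \<in> span (\<Union>(W ` S))" using ab by (simp add: span_add)
    then have "w \<in> W l \<inter> span (\<Union>(W ` S))" using w by blast
    then show "w \<in> {0}" using insert(3)[OF SL lL lS] by blast
  qed
qed


lemma dim_sum:
  assumes "finite S"
  shows "S \<subseteq> Lam \<Longrightarrow> dim (span (\<Union>(W ` S))) = (\<Sum>mu\<in>S. dim (W mu))"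
  using assms
proof (induct S rule: finite_induct)
  case empty then show ?case by simp
next
  case (insert mu S)
  have SL: "S \<subseteq> Lam" and muL: "mu \<in> Lam" using insert(4) by auto
  have e1: "span (W mu) = W mu" by (rule span_subspace[OF subset_refl span_superset W_sub])
  have "span (\<Union>(W ` insert mu S)) = span (W mu \<union> \<Union>(W ` S))" by simp
  also have "\<dots> = {x + y |x y. x \<in> W mu \<and> y \<in> span (\<Union>(W ` S))}" unfolding span_Un e1 ..
  finally have e2: "span (\<Union>(W ` insert mu S)) = {x + y |x y. x \<in> W mu \<and> y \<in> span (\<Union>(W ` S))}" .
  have int: "W mu \<inter> span (\<Union>(W ` S)) = {}  \<or> W mu \<inter> span (\<Union>(W ` S)) = {0}"
    using indep[OF insert(1) SL muL insert(2)] by blast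
  have d0: "dim (W mu \<inter> span (\<Union>(W ` S))) = 0" using int by auto
  have A: "dim {x + y |x y. x \<in> W mu \<and> y \<in> span (\<Union>(W ` S))} + dim (W mu \<inter> span (\<Union>(W ` S)))
      = dim (W mu) + dim (span (\<Union>(W ` S)))" by (rule dim_sums_Int[OF W_sub subspace_span])
  have "dim (span (\<Union>(W ` insert mu S))) = dim (W mu) + dim (span (\<Union>(W ` S)))"
    unfolding e2 using A d0 by linarith
  then show ?case using insert(3)[OF SL] insert(1,2) by simp
qed

lemma orb_Lam: "l \<in> Lam \<Longrightarrow> orb l \<subseteq> Lam" unfolding orb_def using cj_Lam by blast
lemma fin_orb: "finite (orb l)" unfolding orb_def using fin by simp
lemma orb_self: "l \<in> Lam \<Longrightarrow> l \<in> orb l" unfolding orb_def using cj_one[of l] one_closed by force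

lemma orb_span:
  assumes lL: "l \<in> Lam" and ne: "\<not> W l \<subseteq> {0}"
  shows "span (\<Union>(W ` orb l)) = V"
proof -
  define U where "U = span (\<Union>(W ` orb l))"
  have UV: "U \<subseteq> V" unfolding U_def by (rule span_minimal) (use W_V V in auto)
  have inv: "\<sigma> a *v u \<in> U" if a: "a \<in> carrier G" and u: "u \<in> U" for a u
  proof -
    have "\<forall>u\<in>\<Union>(W ` orb l). \<sigma> a *v u \<in> span (\<Union>(W ` orb l))"
    proof
      fix u assume "u \<in> \<Union>(W ` orb l)"
      then obtain b where b: "b \<in> carrier G" "u \<in> W (cj b l)" unfolding orb_def by blast
      have "\<sigma> a *v u \<in> W (cj a (cj b l))" by (rule cj_W[OF a b(2)])
      also have "cj a (cj b l) = cj (a \<otimes> b) l" by (rule cj_cj[OF b(1) a])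
      finally have "\<sigma> a *v u \<in> \<Union>(W ` orb l)" unfolding orb_def using a b(1) by blast
      then show "\<sigma> a *v u \<in> span (\<Union>(W ` orb l))" by (rule span_base)
    qed
    then show ?thesis using span_inv_mat u unfolding U_def by blast
  qed
  have "W l \<subseteq> U" unfolding U_def using orb_self[OF lL] by (blast intro: span_base)
  then have "U \<noteq> {0}" using ne by blast
  then show ?thesis using irr UV inv unfolding U_def by blast
qed

lemma exists_l0: "\<exists>l\<in>Lam. \<not> W l \<subseteq> {0}"
proof -
  have "\<exists>v\<in>V. v \<noteq> 0 \<and> (\<forall>M\<in>\<sigma> ` N. M *v v = v \<or> M *v v = - v)"
  proof (rule common_pm_eigenvector)
    show "finite (\<sigma> ` N)" using finN by simp
    show "subspace V" by (rule V)
    show "odd (dim V)" by (rule od)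
    show "\<forall>M\<in>\<sigma> ` N. \<forall>v\<in>V. M *v v \<in> V" using Vinv Nsub by blast
    show "\<forall>M\<in>\<sigma> ` N. \<exists>j>0. matpow M j = Finite_Cartesian_Product.mat 1"
      using sig_fo[OF hom one fin] order_pos[OF fin] Nsub by blast
    show "\<forall>M\<in>\<sigma> ` N. \<forall>M'\<in>\<sigma> ` N. \<forall>v\<in>V. M *v (M' *v v) = M' *v (M *v v)"
      using Ncomm by blast
  qed
  then obtain v where v: "v \<in> V" "v \<noteq> 0" "\<forall>x\<in>N. \<sigma> x *v v = v \<or> \<sigma> x *v v = - v" by blast
  define l where "l = (\<lambda>x\<in>N. if \<sigma> x *v v = v then 1 else (-1::real))"
  have "l \<in> Lam" unfolding l_def Lam_def by auto
  moreover have "v \<in> W l" unfolding W_def l_def using v by auto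
  ultimately show ?thesis using v(2) by blast
qed

end


context stepctx begin

lemma homm: "x \<in> carrier G \<Longrightarrow> y \<in> carrier G \<Longrightarrow> \<sigma> (x \<otimes> y) = \<sigma> x ** \<sigma> y"
  using hom by blast

lemma step:
  assumes solv: "solvable G"
  shows "concl G \<sigma> V h \<or> (\<exists>B Wd g. hypo (G\<lparr>carrier := B\<rparr>) \<sigma> Wd g \<and> dim Wd < dim V \<and>
           (concl (G\<lparr>carrier := B\<rparr>) \<sigma> Wd g \<longrightarrow> concl G \<sigma> V h))"
proof -
  obtain l0 where l0: "l0 \<in> Lam" "\<not> W l0 \<subseteq> {0}" using exists_l0 by blast
  have sp0: "span (\<Union>(W ` orb l0)) = V" by (rule orb_span[OF l0])
  have dV: "dim V = (\<Sum>mu\<in>orb l0. dim (W mu))"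
    using dim_sum[OF fin_orb orb_Lam[OF l0(1)]] sp0 by simp
  obtain l1 where l1o: "l1 \<in> orb l0" and odd1: "odd (dim (W l1))"
  proof -
    assume r: "\<And>l1. l1 \<in> orb l0 \<Longrightarrow> odd (dim (W l1)) \<Longrightarrow> thesis"
    show thesis
    proof (rule ccontr)
      assume "\<not> thesis"
      then have "\<forall>mu\<in>orb l0. even (dim (W mu))" using r by blast
      then have "even (\<Sum>mu\<in>orb l0. dim (W mu))" by (intro dvd_sum) blast
      then show False using od dV by simp
    qed
  qed
  have l1L: "l1 \<in> Lam" using l1o orb_Lam[OF l0(1)] by blast
  have ne1: "\<not> W l1 \<subseteq> {0}"
  proof
    assume "W l1 \<subseteq> {0}"
    then have d: "dim (W l1) = 0" by simp
    show False using odd1 unfolding d by simp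
  qed
  have sp1: "span (\<Union>(W ` orb l1)) = V" by (rule orb_span[OF l1L ne1])
  obtain w1 where w1: "w1 \<in> W l1" "w1 \<noteq> 0" using ne1 by blast
  have eW1: "span (W l1) = W l1" by (rule span_subspace[OF subset_refl span_superset W_sub])
  obtain x1 where x1: "x1 \<in> N" "l1 x1 = -1"
  proof -
    assume r: "\<And>x1. x1 \<in> N \<Longrightarrow> l1 x1 = -1 \<Longrightarrow> thesis"
    show thesis
    proof (rule ccontr)
      assume "\<not> thesis"
      then have nm: "\<forall>x\<in>N. l1 x \<noteq> -1" using r by blast
      have all1: "\<forall>x\<in>N. l1 x = 1"
      proof
        fix x assume x: "x \<in> N"
        have "l1 x \<in> {1, -1}" using l1L x unfolding Lam_def by (auto simp: PiE_iff)
        then show "l1 x = 1" using nm x by auto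
      qed
      have cj1: "cj a l1 = l1" if a: "a \<in> carrier G" for a
      proof
        fix x show "cj a l1 x = l1 x"
        proof (cases "x \<in> N")
          case True
          have "inv a \<otimes> x \<otimes> a \<in> N" using Nnorm a True by (metis inv_closed inv_inv)
          then show ?thesis using True all1 by (simp add: cj_def)
        next
          case False then show ?thesis using l1L by (simp add: cj_def Lam_def PiE_def extensional_def)
        qed
      qed
      have "orb l1 = {l1}" unfolding orb_def using cj1 one_closed by auto
      then have "W l1 = V" using sp1 eW1 by simp
      then have "\<forall>x\<in>N. \<forall>v\<in>V. \<sigma> x *v v = v" using all1 unfolding W_def by auto
      then show False using Nnt by blast
    qed
  qed
  define f where "f x = (SOME y. y \<in> N \<and> \<sigma> x ** h = h ** \<sigma> y)" for x
  have f: "f x \<in> N \<and> \<sigma> x ** h = h ** \<sigma> (f x)" if "x \<in> N" for x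
    using someI_ex[of "\<lambda>y. y \<in> N \<and> \<sigma> x ** h = h ** \<sigma> y"] Nconj that unfolding f_def by blast
  define muh where "muh = (\<lambda>x\<in>N. l1 (f x))"
  have muhL: "muh \<in> Lam" using l1L f unfolding muh_def Lam_def by (auto simp: PiE_iff)
  have hW: "h *v w \<in> W muh" if w: "w \<in> W l1" for w
  proof -
    have wV: "w \<in> V" using w W_V by blast
    have "\<sigma> x *v (h *v w) = muh x *\<^sub>R (h *v w)" if x: "x \<in> N" for x
    proof -
      have "\<sigma> x *v (h *v w) = h *v (\<sigma> (f x) *v w)" using f[OF x] by (metis matrix_vector_mul_assoc)
      also have "\<dots> = h *v (l1 (f x) *\<^sub>R w)" using w f[OF x] unfolding W_def by simp
      also have "\<dots> = muh x *\<^sub>R (h *v w)" using x by (simp add: muh_def mv_scale)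
      finally show ?thesis .
    qed
    then show ?thesis using hV wV unfolding W_def by blast
  qed
  have hinj: "h *v w \<noteq> 0" if "w \<noteq> 0" for w
  proof
    assume h0: "h *v w = 0"
    obtain i where i: "j = Suc i" using jpos not0_implies_Suc by blast
    have "w = matpow h j *v w" using hj by simp
    also have "\<dots> = matpow h i *v (h *v w)" unfolding i
      by (simp add: matpow_comm matrix_vector_mul_assoc)
    also have "\<dots> = 0" using h0 by simp
    finally show False using that by simp
  qed
  have neh: "\<not> W muh \<subseteq> {0}" using hW[OF w1(1)] hinj[OF w1(2)] by blast
  have "muh \<in> orb l1"
  proof (rule ccontr)
    assume nin: "muh \<notin> orb l1"
    have "W muh \<inter> span (\<Union>(W ` orb l1)) \<subseteq> {0}" by (rule indep[OF fin_orb orb_Lam[OF l1L] muhL nin])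
    then have "W muh \<subseteq> {0}" using sp1 W_V by blast
    then show False using neh by blast
  qed
  then obtain a where a: "a \<in> carrier G" "muh = cj a l1" unfolding orb_def by blast
  define g where "g = \<sigma> (inv a) ** h"
  have ia: "inv a \<in> carrier G" using a by simp
  have gW: "g *v w \<in> W l1" if w: "w \<in> W l1" for w
  proof -
    have "\<sigma> (inv a) *v (h *v w) \<in> W (cj (inv a) (cj a l1))" using cj_W[OF ia hW[OF w, unfolded a(2)]] .
    also have "cj (inv a) (cj a l1) = l1" using cj_cj[OF a(1) ia] cj_one[OF l1L] a(1) by simp
    finally show ?thesis unfolding g_def by (simp add: matrix_vector_mul_assoc)
  qed
  show ?thesis
  proof (cases "W l1 = V")
    case True
    have "\<exists>v\<in>V. v \<noteq> 0 \<and> (\<forall>M\<in>{h}. M *v v = v \<or> M *v v = - v)"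
      by (rule common_pm_eigenvector) (use V od hV hj jpos in auto)
    then obtain v where v: "v \<in> V" "v \<noteq> 0" "h *v v = v \<or> h *v v = - v" by blast
    have sx1: "\<sigma> x1 *v u = - u" if "u \<in> V" for u
    proof -
      have "u \<in> W l1" using that True by simp
      then show ?thesis using x1 unfolding W_def by simp
    qed
    have "concl G \<sigma> V h"
    proof (cases "h *v v = v")
      case True then show ?thesis unfolding concl_def using v one one_closed by (intro bexI[of _ \<one>]) auto
    next
      case False
      then have hv: "h *v v = - v" using v(3) by blast
      have "\<sigma> x1 *v (- v) = - (\<sigma> x1 *v v)" using mv_scale[of "\<sigma> x1" "-1" v] by simp
      then have "\<sigma> x1 *v (h *v v) = v" using sx1[OF v(1)] hv by simp
      then show ?thesis unfolding concl_def using x1 Nsub v by blast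
    qed
    then show ?thesis by blast
  next
    case False
    define Wd where "Wd = W l1"
    define B where "B = {b \<in> carrier G. \<forall>w\<in>Wd. \<sigma> b *v w \<in> Wd}"
    have WdV: "Wd \<subseteq> V" unfolding Wd_def by (rule W_V)
    have sWd: "subspace Wd" unfolding Wd_def by (rule W_sub)
    have dlt: "dim Wd < dim V"
    proof -
      have "dim Wd \<le> dim V" by (rule dim_subset[OF WdV])
      moreover have "dim Wd \<noteq> dim V"
      proof
        assume "dim Wd = dim V"
        then have "Wd = V" using subspace_dim_equal[OF sWd V WdV] by simp
        then show False using False Wd_def by simp
      qed
      ultimately show ?thesis by simp
    qed
    define J where "J = j * order G"
    have gJ: "matpow g J = Finite_Cartesian_Product.mat 1" "J > 0"
      using fo_conj[OF hom one fin norm1 ia hj jpos] unfolding J_def g_def by auto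
    obtain J1 where J1: "J = Suc J1" using gJ(2) not0_implies_Suc by blast
    define gi where "gi = matpow g J1"
    have gi1: "gi ** g = Finite_Cartesian_Product.mat 1" "g ** gi = Finite_Cartesian_Product.mat 1"
      using gJ(1) unfolding J1 gi_def by (simp_all add: matpow_comm)
    have gWd: "g *v w \<in> Wd" if "w \<in> Wd" for w using gW that Wd_def by blast
    have giW: "gi *v w \<in> Wd" if "w \<in> Wd" for w unfolding gi_def by (rule matpow_inv[OF gWd that])
    have ggi: "g *v (gi *v w) = w" for w using gi1(2) by (simp add: matrix_vector_mul_assoc)
    have gig: "gi *v (g *v w) = w" for w using gi1(1) by (simp add: matrix_vector_mul_assoc)
    have Bsub: "B \<subseteq> carrier G" unfolding B_def by blast
    have oneB: "\<one> \<in> B" unfolding B_def using one by simp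
    have Bsg: "subgroup B G"
    proof (rule subgroupI[OF Bsub])
      show "B \<noteq> {}" using oneB by blast
    next
      fix b assume b: "b \<in> B"
      then have bc: "b \<in> carrier G" using Bsub by blast
      have op: "order G > 0" using order_pos[OF fin] .
      have "b [^] (order G - 1) \<otimes> b = b [^] Suc (order G - 1)" using bc by simp
      also have "\<dots> = \<one>" using op pow_order_eq_1[OF bc] by simp
      finally have "inv b = b [^] (order G - 1)" using bc by (intro inv_equality) auto
      then have "\<sigma> (inv b) = matpow (\<sigma> b) (order G - 1)" using sig_pow[OF hom one bc] by simp
      moreover have "matpow (\<sigma> b) (order G - 1) *v w \<in> Wd" if "w \<in> Wd" for w
        using matpow_inv[of Wd "\<sigma> b" w] b that unfolding B_def by blast
      ultimately show "inv b \<in> B" using bc unfolding B_def by simp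
    next
      fix b c assume "b \<in> B" "c \<in> B"
      then show "b \<otimes> c \<in> B" unfolding B_def by (simp add: homm matrix_vector_mul_assoc[symmetric])
    qed
    have x1B: "x1 \<in> B"
    proof -
      have "\<sigma> x1 *v w \<in> Wd" if "w \<in> Wd" for w
      proof -
        have "\<sigma> x1 *v w = - w" using that x1 unfolding Wd_def W_def by simp
        then show ?thesis using subspace_neg[OF sWd that] by simp
      qed
      then show ?thesis unfolding B_def using x1 Nsub by blast
    qed
    have irrB: "U = {0} \<or> U = Wd"
      if U: "subspace U" "U \<subseteq> Wd" "\<forall>k\<in>B. \<forall>u\<in>U. \<sigma> k *v u \<in> U" for U
    proof (cases "U \<subseteq> {0}")
      case True then show ?thesis using subspace_0[OF U(1)] by blast
    next
      case False
      define Z where "Z = span {\<sigma> a *v u | a u. a \<in> carrier G \<and> u \<in> U}"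
      have ZV: "Z \<subseteq> V" unfolding Z_def
        by (rule span_minimal) (use U(2) WdV Vinv V in blast)+
      have Zinv: "\<forall>k\<in>carrier G. \<forall>z\<in>Z. \<sigma> k *v z \<in> Z"
      proof (intro ballI)
        fix k z assume k: "k \<in> carrier G" and z: "z \<in> Z"
        have "\<forall>u\<in>{\<sigma> a *v u | a u. a \<in> carrier G \<and> u \<in> U}. \<sigma> k *v u \<in> Z"
        proof
          fix y assume "y \<in> {\<sigma> a *v u | a u. a \<in> carrier G \<and> u \<in> U}"
          then obtain a' u where au: "a' \<in> carrier G" "u \<in> U" "y = \<sigma> a' *v u" by blast
          have "\<sigma> k *v y = \<sigma> (k \<otimes> a') *v u" using au k by (simp add: homm matrix_vector_mul_assoc)
          moreover have "k \<otimes> a' \<in> carrier G" using au k by simp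
          ultimately show "\<sigma> k *v y \<in> Z" unfolding Z_def using au by (blast intro: span_base)
        qed
        then show "\<sigma> k *v z \<in> Z" using span_inv_mat z unfolding Z_def by blast
      qed
      have UZ: "U \<subseteq> Z"
      proof
        fix u assume "u \<in> U"
        then have "\<sigma> \<one> *v u \<in> {\<sigma> a *v u | a u. a \<in> carrier G \<and> u \<in> U}" by blast
        then show "u \<in> Z" unfolding Z_def using one by (simp add: span_base)
      qed
      have "Z \<noteq> {0}" using UZ False by blast
      then have ZeV: "Z = V" using irr ZV Zinv unfolding Z_def by blast
      define T where "T = span (U \<union> \<Union>(W ` (Lam - {l1})))"
      have ZT: "Z \<subseteq> T" unfolding Z_def T_def
      proof (rule span_minimal[OF _ subspace_span], rule subsetI)
        fix y assume "y \<in> {\<sigma> a *v u | a u. a \<in> carrier G \<and> u \<in> U}"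
        then obtain a' u where au: "a' \<in> carrier G" "u \<in> U" "y = \<sigma> a' *v u" by blast
        have uW: "u \<in> W l1" using au(2) U(2) Wd_def by blast
        have yW: "y \<in> W (cj a' l1)" using cj_W[OF au(1) uW] au(3) by simp
        show "y \<in> span (U \<union> \<Union>(W ` (Lam - {l1})))"
        proof (cases "cj a' l1 = l1")
          case True
          have "\<sigma> a' *v w \<in> Wd" if "w \<in> Wd" for w
            using cj_W[OF au(1), of w l1] that True unfolding Wd_def by simp
          then have "a' \<in> B" unfolding B_def using au(1) by blast
          then have "y \<in> U" using U(3) au by blast
          then show ?thesis by (blast intro: span_base)
        next
          case False
          have "cj a' l1 \<in> Lam - {l1}" using cj_Lam[OF au(1) l1L] False by blast
          then show ?thesis using yW by (blast intro: span_base)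
        qed
      qed
      have eU: "span U = U" by (rule span_subspace[OF subset_refl span_superset U(1)])
      have "Wd \<subseteq> U"
      proof
        fix w assume w: "w \<in> Wd"
        then have "w \<in> T" using WdV ZeV ZT by blast
        then obtain x y where xy: "x \<in> span U" "y \<in> span (\<Union>(W ` (Lam - {l1})))" "w = x + y"
          unfolding T_def span_Un by blast
        have xU: "x \<in> U" using xy(1) unfolding eU .
        have "y = w - x" using xy(3) by simp
        then have yW: "y \<in> W l1" using subspace_diff[OF sWd w] xU U(2) unfolding Wd_def by blast
        have "W l1 \<inter> span (\<Union>(W ` (Lam - {l1}))) \<subseteq> {0}"
          by (rule indep) (use finLam l1L in auto)
        then have "y = 0" using yW xy(2) by blast
        then show "w \<in> U" using xy(3) xU by simp
      qed
      then show ?thesis using U(2) by blast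
    qed
    have norm1B: "\<exists>b'\<in>B. g ** \<sigma> b = \<sigma> b' ** g" if b: "b \<in> B" for b
    proof -
      have bc: "b \<in> carrier G" using b Bsub by blast
      obtain k' where k': "k' \<in> carrier G" "h ** \<sigma> b = \<sigma> k' ** h" using norm1 bc by blast
      define b' where "b' = inv a \<otimes> k' \<otimes> a"
      have b'c: "b' \<in> carrier G" unfolding b'_def using k' a by simp
      have "inv a \<otimes> k' \<otimes> a \<otimes> inv a = inv a \<otimes> k'" using k' a by (simp add: m_assoc)
      then have e: "\<sigma> b' ** \<sigma> (inv a) = \<sigma> (inv a) ** \<sigma> k'"
        using k' a b'c unfolding b'_def by (metis homm inv_closed m_closed)
      have eqb: "g ** \<sigma> b = \<sigma> b' ** g"
      proof -
        have "g ** \<sigma> b = \<sigma> (inv a) ** (h ** \<sigma> b)" unfolding g_def by (simp add: matrix_mul_assoc)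
        also have "\<dots> = (\<sigma> (inv a) ** \<sigma> k') ** h" using k'(2) by (simp add: matrix_mul_assoc)
        also have "\<dots> = \<sigma> b' ** g" unfolding g_def e[symmetric] by (simp add: matrix_mul_assoc)
        finally show ?thesis .
      qed
      have "\<sigma> b' *v w \<in> Wd" if w: "w \<in> Wd" for w
      proof -
        have "\<sigma> b' *v w = \<sigma> b' *v (g *v (gi *v w))" by (simp add: ggi)
        also have "\<dots> = (\<sigma> b' ** g) *v (gi *v w)" by (simp add: matrix_vector_mul_assoc matrix_mul_assoc)
        also have "\<dots> = (g ** \<sigma> b) *v (gi *v w)" by (simp only: eqb)
        also have "\<dots> = g *v (\<sigma> b *v (gi *v w))" by (simp add: matrix_vector_mul_assoc matrix_mul_assoc)
        finally show ?thesis using gWd giW w b unfolding B_def by simp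
      qed
      then have "b' \<in> B" unfolding B_def using b'c by blast
      then show ?thesis using eqb by blast
    qed
    have norm2B: "\<exists>b'\<in>B. \<sigma> b ** g = g ** \<sigma> b'" if b: "b \<in> B" for b
    proof -
      have bc: "b \<in> carrier G" using b Bsub by blast
      have kc: "a \<otimes> b \<otimes> inv a \<in> carrier G" using a bc by simp
      obtain k'' where k'': "k'' \<in> carrier G" "\<sigma> (a \<otimes> b \<otimes> inv a) ** h = h ** \<sigma> k''" using norm2 kc by blast
      have "inv a \<otimes> (a \<otimes> b \<otimes> inv a) = b \<otimes> inv a" using a bc by (simp add: m_assoc[symmetric])
      then have e: "\<sigma> (inv a) ** \<sigma> (a \<otimes> b \<otimes> inv a) = \<sigma> b ** \<sigma> (inv a)"
        using a bc kc by (metis homm inv_closed)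
      have eqb: "\<sigma> b ** g = g ** \<sigma> k''"
      proof -
        have "\<sigma> b ** g = (\<sigma> b ** \<sigma> (inv a)) ** h" unfolding g_def by (simp add: matrix_mul_assoc)
        also have "\<dots> = \<sigma> (inv a) ** (\<sigma> (a \<otimes> b \<otimes> inv a) ** h)" unfolding e[symmetric] by (simp add: matrix_mul_assoc)
        also have "\<dots> = g ** \<sigma> k''" unfolding k''(2) g_def by (simp add: matrix_mul_assoc)
        finally show ?thesis .
      qed
      have "\<sigma> k'' *v w \<in> Wd" if w: "w \<in> Wd" for w
      proof -
        have "\<sigma> k'' *v w = gi *v (g *v (\<sigma> k'' *v w))" by (simp add: gig)
        also have "\<dots> = gi *v ((g ** \<sigma> k'') *v w)" by (simp add: matrix_vector_mul_assoc matrix_mul_assoc)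
        also have "\<dots> = gi *v ((\<sigma> b ** g) *v w)" by (simp only: eqb)
        also have "\<dots> = gi *v (\<sigma> b *v (g *v w))" by (simp add: matrix_vector_mul_assoc matrix_mul_assoc)
        finally show ?thesis using gWd giW w b unfolding B_def by simp
      qed
      then have "k'' \<in> B" unfolding B_def using k'' by blast
      then show ?thesis using eqb by blast
    qed
    have w1Wd: "w1 \<in> Wd" using w1 Wd_def by simp
    have mw: "\<sigma> x1 *v w1 = - w1" using w1 x1 unfolding W_def by simp
    have ntB: "\<sigma> x1 *v w1 \<noteq> w1"
    proof
      assume "\<sigma> x1 *v w1 = w1"
      then have "w1 = - w1" using mw by simp
      then have "(2::real) *\<^sub>R w1 = 0" by (metis scaleR_2 left_minus)
      then show False using w1(2) by simp
    qed
    have hyp: "hypo (G\<lparr>carrier := B\<rparr>) \<sigma> Wd g"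
      unfolding hypo_def
    proof (intro conjI)
      show "group (G\<lparr>carrier := B\<rparr>)" by (rule subgroup_imp_group[OF Bsg])
      show "finite (carrier (G\<lparr>carrier := B\<rparr>))" using finite_subset[OF Bsub fin] by simp
      show "solvable (G\<lparr>carrier := B\<rparr>)" by (rule solvable_subgroup_grp[OF Bsg solv])
      show "\<forall>x\<in>carrier (G\<lparr>carrier := B\<rparr>). \<forall>y\<in>carrier (G\<lparr>carrier := B\<rparr>). \<sigma> (x \<otimes>\<^bsub>G\<lparr>carrier := B\<rparr>\<^esub> y) = \<sigma> x ** \<sigma> y"
        using Bsub homm by auto
      show "\<sigma> \<one>\<^bsub>G\<lparr>carrier := B\<rparr>\<^esub> = Finite_Cartesian_Product.mat 1" using one by simp
      show "subspace Wd" by (rule sWd)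
      show "odd (dim Wd)" using odd1 Wd_def by simp
      show "\<forall>k\<in>carrier (G\<lparr>carrier := B\<rparr>). \<forall>v\<in>Wd. \<sigma> k *v v \<in> Wd" unfolding B_def by simp
      show "\<forall>U. subspace U \<and> U \<subseteq> Wd \<and> (\<forall>k\<in>carrier (G\<lparr>carrier := B\<rparr>). \<forall>u\<in>U. \<sigma> k *v u \<in> U) \<longrightarrow> U = {0} \<or> U = Wd"
        using irrB by simp
      show "\<exists>k\<in>carrier (G\<lparr>carrier := B\<rparr>). \<exists>v\<in>Wd. \<sigma> k *v v \<noteq> v" using x1B w1Wd ntB by auto
      show "\<exists>j>0. matpow g j = Finite_Cartesian_Product.mat 1" using gJ by blast
      show "\<forall>v\<in>Wd. g *v v \<in> Wd" using gWd by blast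
      show "\<forall>k\<in>carrier (G\<lparr>carrier := B\<rparr>). \<exists>k'\<in>carrier (G\<lparr>carrier := B\<rparr>). g ** \<sigma> k = \<sigma> k' ** g"
        using norm1B by simp
      show "\<forall>k\<in>carrier (G\<lparr>carrier := B\<rparr>). \<exists>k'\<in>carrier (G\<lparr>carrier := B\<rparr>). \<sigma> k ** g = g ** \<sigma> k'"
        using norm2B by simp
    qed
    have tr: "concl G \<sigma> V h" if c: "concl (G\<lparr>carrier := B\<rparr>) \<sigma> Wd g"
    proof -
      obtain b v where bv: "b \<in> B" "v \<in> Wd" "v \<noteq> 0" "\<sigma> b *v (g *v v) = v" using c unfolding concl_def by auto
      have bc: "b \<in> carrier G" using bv Bsub by blast
      have "\<sigma> (b \<otimes> inv a) *v (h *v v) = v" using bv(4) bc ia unfolding g_def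
        by (simp add: homm matrix_vector_mul_assoc matrix_mul_assoc)
      moreover have "b \<otimes> inv a \<in> carrier G" using bc ia by simp
      ultimately show ?thesis unfolding concl_def using bv WdV by blast
    qed
    show ?thesis using hyp dlt tr by blast
  qed
qed

end


lemma main_ind:
  fixes G :: "('a, 'b) monoid_scheme" and \<sigma> :: "'a \<Rightarrow> real^'n^'n"
  shows "hypo G \<sigma> V h \<Longrightarrow> concl G \<sigma> V h"
proof (induct "dim V" arbitrary: G V h rule: less_induct)
  case less
  have grp: "group G" and fin: "finite (carrier G)" and solv: "solvable G"
    and hom: "\<forall>x\<in>carrier G. \<forall>y\<in>carrier G. \<sigma> (x \<otimes>\<^bsub>G\<^esub> y) = \<sigma> x ** \<sigma> y"
    and one: "\<sigma> \<one>\<^bsub>G\<^esub> = Finite_Cartesian_Product.mat 1" and V: "subspace V" and od: "odd (dim V)"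
    and Vinv: "\<forall>k\<in>carrier G. \<forall>v\<in>V. \<sigma> k *v v \<in> V"
    and irr: "\<forall>U. subspace U \<and> U \<subseteq> V \<and> (\<forall>k\<in>carrier G. \<forall>u\<in>U. \<sigma> k *v u \<in> U) \<longrightarrow> U = {0} \<or> U = V"
    and nt: "\<exists>k\<in>carrier G. \<exists>v\<in>V. \<sigma> k *v v \<noteq> v"
    and hjx: "\<exists>j>0. matpow h j = Finite_Cartesian_Product.mat 1" and hV: "\<forall>v\<in>V. h *v v \<in> V"
    and norm1: "\<forall>k\<in>carrier G. \<exists>k'\<in>carrier G. h ** \<sigma> k = \<sigma> k' ** h"
    and norm2: "\<forall>k\<in>carrier G. \<exists>k'\<in>carrier G. \<sigma> k ** h = h ** \<sigma> k'"
    using less.prems unfolding hypo_def by blast+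
  obtain j where j: "j > 0" "matpow h j = Finite_Cartesian_Product.mat 1" using hjx by blast
  obtain N where N: "N \<subseteq> carrier G" "\<forall>a\<in>carrier G. \<forall>x\<in>N. a \<otimes>\<^bsub>G\<^esub> x \<otimes>\<^bsub>G\<^esub> inv\<^bsub>G\<^esub> a \<in> N"
    "\<forall>x\<in>N. \<exists>y\<in>N. \<sigma> x ** h = h ** \<sigma> y"
    "\<forall>x\<in>N. \<forall>y\<in>N. \<forall>v\<in>V. \<sigma> x *v (\<sigma> y *v v) = \<sigma> y *v (\<sigma> x *v v)"
    "\<exists>x\<in>N. \<exists>v\<in>V. \<sigma> x *v v \<noteq> v"
    using group.exists_N[OF grp hom one solv Vinv nt norm2] by blast
  have sc: "stepctx G \<sigma> V h N j"
    by (intro stepctx.intro stepctx_axioms.intro grp fin hom one V od Vinv irr j(2) j(1) hV norm1 norm2 N)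
  show ?case
  proof (cases "concl G \<sigma> V h")
    case True then show ?thesis .
  next
    case False
    then obtain B Wd g where B: "hypo (G\<lparr>carrier := B\<rparr>) \<sigma> Wd g" "dim Wd < dim V"
      "concl (G\<lparr>carrier := B\<rparr>) \<sigma> Wd g \<longrightarrow> concl G \<sigma> V h"
      using stepctx.step[OF sc solv] by blast
    have "concl (G\<lparr>carrier := B\<rparr>) \<sigma> Wd g" using less.hyps[OF B(2) B(1)] .
    then show ?thesis using B(3) by blast
  qed
qed

theorem corollary3p2p4:
  fixes G :: "('a, 'b) monoid_scheme"
  assumes "group G" and "finite (carrier G)" and "solvable G"
  shows "eigenvalue_one_property_dim G TYPE('n::finite)"
  unfolding eigenvalue_one_property_dim_def
proof (intro impI allI)
  fix \<sigma> :: "'a \<Rightarrow> real^'n^'n" and m :: "real^'n^'n"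
  assume odd: "odd CARD('n)"
  assume H: "real_rep G \<sigma> \<and> irreducible_rep G \<sigma> \<and> nontrivial_rep G \<sigma> \<and> in_normalizer_GL G \<sigma> m \<and> has_finite_order m"
  have rr: "\<forall>x\<in>carrier G. invertible (\<sigma> x)" "\<forall>x\<in>carrier G. \<forall>y\<in>carrier G. \<sigma> (x \<otimes>\<^bsub>G\<^esub> y) = \<sigma> x ** \<sigma> y"
    using H unfolding real_rep_def by blast+
  have one: "\<sigma> \<one>\<^bsub>G\<^esub> = Finite_Cartesian_Product.mat 1"
  proof -
    have oc: "\<one>\<^bsub>G\<^esub> \<in> carrier G" using group.is_monoid[OF assms(1)] monoid.one_closed by blast
    obtain A' where A': "A' ** \<sigma> \<one>\<^bsub>G\<^esub> = Finite_Cartesian_Product.mat 1" using rr(1) oc invertible_def by blast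
    have "\<sigma> \<one>\<^bsub>G\<^esub> = \<sigma> \<one>\<^bsub>G\<^esub> ** \<sigma> \<one>\<^bsub>G\<^esub>"
      using rr(2) oc monoid.l_one[OF group.is_monoid[OF assms(1)] oc] by metis
    then have "A' ** \<sigma> \<one>\<^bsub>G\<^esub> = (A' ** \<sigma> \<one>\<^bsub>G\<^esub>) ** \<sigma> \<one>\<^bsub>G\<^esub>" by (metis matrix_mul_assoc)
    then show ?thesis using A' by simp
  qed
  have minv: "m ** matrix_inv m = Finite_Cartesian_Product.mat 1 \<and> matrix_inv m ** m = Finite_Cartesian_Product.mat 1"
    using H unfolding in_normalizer_GL_def invertible_def matrix_inv_def by (metis (mono_tags, lifting) someI_ex)
  have img: "(\<lambda>k. m ** \<sigma> k ** matrix_inv m) ` carrier G = \<sigma> ` carrier G"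
    using H unfolding in_normalizer_GL_def by blast
  have norm1: "\<forall>k\<in>carrier G. \<exists>k'\<in>carrier G. m ** \<sigma> k = \<sigma> k' ** m"
  proof
    fix k assume k: "k \<in> carrier G"
    then have "m ** \<sigma> k ** matrix_inv m \<in> \<sigma> ` carrier G" using img by blast
    then obtain k' where k': "k' \<in> carrier G" "m ** \<sigma> k ** matrix_inv m = \<sigma> k'" by auto
    have "m ** \<sigma> k = m ** \<sigma> k ** matrix_inv m ** m" using minv by (simp add: matrix_mul_assoc[symmetric])
    then show "\<exists>k'\<in>carrier G. m ** \<sigma> k = \<sigma> k' ** m" using k' by metis
  qed
  have norm2: "\<forall>k\<in>carrier G. \<exists>k'\<in>carrier G. \<sigma> k ** m = m ** \<sigma> k'"
  proof
    fix k assume k: "k \<in> carrier G"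
    then have "\<sigma> k \<in> (\<lambda>k. m ** \<sigma> k ** matrix_inv m) ` carrier G" using img by blast
    then obtain k' where k': "k' \<in> carrier G" "\<sigma> k = m ** \<sigma> k' ** matrix_inv m" by auto
    have "\<sigma> k ** m = m ** \<sigma> k' ** (matrix_inv m ** m)" using k'(2) by (simp add: matrix_mul_assoc)
    then show "\<exists>k'\<in>carrier G. \<sigma> k ** m = m ** \<sigma> k'" using k' minv by (metis matrix_mul_rid)
  qed
  have nt: "\<exists>k\<in>carrier G. \<exists>v\<in>UNIV. \<sigma> k *v v \<noteq> v"
  proof -
    obtain k where k: "k \<in> carrier G" "\<sigma> k \<noteq> Finite_Cartesian_Product.mat 1" using H unfolding nontrivial_rep_def by blast
    then obtain v where "\<sigma> k *v v \<noteq> Finite_Cartesian_Product.mat 1 *v v" using matrix_eq by blast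
    then show ?thesis using k by auto
  qed
  have irr: "\<forall>U. subspace U \<and> U \<subseteq> UNIV \<and> (\<forall>k\<in>carrier G. \<forall>u\<in>U. \<sigma> k *v u \<in> U) \<longrightarrow> U = {0} \<or> U = UNIV"
    using H unfolding irreducible_rep_def by blast
  have hy: "hypo G \<sigma> (UNIV :: (real^'n) set) m"
    unfolding hypo_def
  proof (intro conjI)
    show "odd (dim (UNIV :: (real^'n) set))" using odd by simp
    show "\<exists>j>0. matpow m j = Finite_Cartesian_Product.mat 1" using H unfolding has_finite_order_def by blast
  qed (use assms rr(2) one norm1 norm2 nt irr in auto)
  then have "concl G \<sigma> UNIV m" by (rule main_ind)
  then obtain k v where kv: "k \<in> carrier G" "v \<noteq> 0" "\<sigma> k *v (m *v v) = v" unfolding concl_def by blast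
  then have "(\<sigma> k ** m) *v v = v" by (simp add: matrix_vector_mul_assoc)
  then show "\<exists>k\<in>carrier G. has_eigenvalue_one (\<sigma> k ** m)" using kv unfolding has_eigenvalue_one_def by blast
qed

end
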